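(* In the setting below, for any parameters $\epsilon_1,\epsilon_2,\epsilon_3>0$, $0<\theta_l<\theta_u$, $\rho^0>0$, $\sigma>1$ and $y^0\in\Upsilon_\tau$, the termination condition in step (ii) of Algorithm PDC is satisfied after finitely many iterations.
   Context: Setting. $\mathcal A$ is a finite set of links; $\mathcal V=\{\Delta h: h\ge0,\ \Lambda h=d\}\subset\mathbb R^{|\mathcal A|}$, where $\Delta$ is a 0/1 link–route incidence matrix, $\Lambda$ a 0/1 OD–route incidence matrix in which every route belongs to exactly one OD pair and every OD pair has at least one route, and $d>0$ (so $\mathcal V$ is a nonempty compact convex polytope in $\mathbb R^{|\mathcal A|}_{\ge0}$). Let $u_a\ge0$, $\mathcal Y=\{y: 0\le y_a\le u_a\ \forall a\}$, $1\le\tau\le|\mathcal A|$, $\Upsilon_\tau=\{y\in\mathcal Y: |\{a: y_a>0\}|\le\tau\}$. Standing assumptions: each $t_a(y_a,v_a)$ is continuously differentiable and strictly increasing in $v_a$ for $y_a\ge0$; each $G_a$ is nonnegative, continuously differentiable, strictly increasing, convex; $\int_0^{v_a}t_a(y_a,w)dw$ and $t_a(y_a,v_a)v_a$ are convex in $(y_a,v_a)$. With $\eta>0$: $F(y,v)=\sum_a t_a(y_a,v_a)v_a+\eta\sum_aG_a(y_a)$, $f(y,v)=\sum_a\int_0^{v_a}t_a(y_a,w)dw$, $g(y)=\min_{v\in\mathcal V}f(y,v)$, $\varphi(y,v)=f(y,v)-g(y)$. $\mathcal V^*(y)$ is the set of $v\in\mathcal V$ with $\langle t(y,v),v'-v\rangle\ge0$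 for all $v'\in\mathcal V$; it is a singleton equal to $\arg\min_{v\in\mathcal V}f(y,v)$. Known fact: $g$ is convex and continuously differentiable on $\mathcal Y$. Define $\Phi(y,v;\bar y,\bar v)=f(y,v)-g(\bar y)-\nabla g(\bar y)^{\mathsf T}(y-\bar y)$ and, for given $\rho^k,\beta^k>0$ and $(y^k,v^k)$, $\Psi^k(y,v)=F(y,v)+\rho^k\Phi(y,v;y^k,v^k)+\rho^k\beta^k\|(y-y^k,v-v^k)\|_2^2$. Algorithm AMA with inputs $(\rho^k,\beta^k,y^k,v^k;y^{k,0})$: for $j=0,1,\dots$: $v^{k,j+1}$ = unique minimizer of $\Psi^k(y^{k,j},\cdot)$ over $\mathcal V$; $y^{k,j+1}$ = a minimizer of $\Psi^k(\cdot,v^{k,j+1})$ over $\Upsilon_\tau$; stop if $(y^{k,j+1},v^{k,j+1})$ is partially optimal (i.e. $\Psi^k(y^{k,j+1},v^{k,j+1})\le\Psi^k(y^{k,j+1},v)\ \forall v\in\mathcal V$ and $\le\Psi^k(y,v^{k,j+1})\ \forall y\in\Upsilon_\tau$). $\mathrm{AMA}(\cdot)$ denotes the returned point if it stops, otherwise any accumulation point of its iterates. Algorithm PDC with parameters $\epsilon_1,\epsilon_2,\epsilon_3>0$, $0<\theta_l<\theta_u$, $\rho^0>0$, $\sigma>1$, $y^0\in\Upsilon_\tau$: set $v^0\in\mathcal V^*(y^0)$ and choose $\beta^0\in[\theta_l/\rho^0,\theta_u/\rho^0]$; for $k=0,1,\dots$: (i) $(y^{k+1},v^{k+1})=\mathrm{AMA}(\rho^k,\beta^k,y^k,v^k;y^k)$;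 (ii) if $\|y^{k+1}-y^k\|_2\le\epsilon_1$, $\|v^{k+1}-v^k\|_2\le\epsilon_2$ and $\Phi(y^{k+1},v^{k+1};y^k,v^k)\le\epsilon_3$, stop and return $(y^{k+1},v^{k+1})$; (iii) set $\rho^{k+1}=\sigma\rho^k$ if $\Phi(y^{k+1},v^{k+1};y^k,v^k)>\epsilon_3$, else $\rho^{k+1}=\rho^k$; (iv) choose $\beta^{k+1}\in[\theta_l/\rho^{k+1},\theta_u/\rho^{k+1}]$. *)

theory Defs
  imports "HOL-Analysis.Analysis"
begin

definition C1_on :: "'b::real_normed_vector set \<Rightarrow> ('b \<Rightarrow> real) \<Rightarrow> bool" where
  "C1_on S f \<longleftrightarrow> (\<exists>f'. (\<forall>x\<in>S. (f has_derivative blinfun_apply (f' x)) (at x within S))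
                       \<and> continuous_on S f')"

definition Vset :: "real^'r^'a \<Rightarrow> real^'r^'w \<Rightarrow> real^'w \<Rightarrow> (real^'a) set" where
  "Vset Delta Lambda d = {Delta *v h | h. (\<forall>r. 0 \<le> h $ r) \<and> Lambda *v h = d}"

definition Yset :: "real^'a \<Rightarrow> (real^'a) set" where
  "Yset u = {y. \<forall>a. 0 \<le> y $ a \<and> y $ a \<le> u $ a}"

definition Upsilon :: "real^'a \<Rightarrow> nat \<Rightarrow> (real^'a) set" where
  "Upsilon u \<tau> = {y \<in> Yset u. card {a. y $ a > 0} \<le> \<tau>}"

definition tvec :: "('a::finite \<Rightarrow> real \<Rightarrow> real \<Rightarrow> real) \<Rightarrow> real^'a \<Rightarrow> real^'a \<Rightarrow> real^'a" where
  "tvec t y v = (\<chi> a. t a (y $ a) (v $ a))"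

definition FF :: "('a::finite \<Rightarrow> real \<Rightarrow> real \<Rightarrow> real) \<Rightarrow> ('a \<Rightarrow> real \<Rightarrow> real) \<Rightarrow> real
    \<Rightarrow> real^'a \<Rightarrow> real^'a \<Rightarrow> real" where
  "FF t G \<eta> y v = (\<Sum>a\<in>UNIV. t a (y $ a) (v $ a) * v $ a) + \<eta> * (\<Sum>a\<in>UNIV. G a (y $ a))"

definition ff :: "('a::finite \<Rightarrow> real \<Rightarrow> real \<Rightarrow> real) \<Rightarrow> real^'a \<Rightarrow> real^'a \<Rightarrow> real" where
  "ff t y v = (\<Sum>a\<in>UNIV. integral {0..v $ a} (\<lambda>w. t a (y $ a) w))"

definition gg :: "('a::finite \<Rightarrow> real \<Rightarrow> real \<Rightarrow> real) \<Rightarrow> (real^'a) set \<Rightarrow> real^'a \<Rightarrow> real" where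
  "gg t V y = (INF v\<in>V. ff t y v)"

definition Vstar :: "('a::finite \<Rightarrow> real \<Rightarrow> real \<Rightarrow> real) \<Rightarrow> (real^'a) set \<Rightarrow> real^'a \<Rightarrow> (real^'a) set" where
  "Vstar t V y = {v \<in> V. \<forall>v'\<in>V. tvec t y v \<bullet> (v' - v) \<ge> 0}"

definition Phi :: "('a::finite \<Rightarrow> real \<Rightarrow> real \<Rightarrow> real) \<Rightarrow> (real^'a) set \<Rightarrow> (real^'a \<Rightarrow> real^'a)
    \<Rightarrow> real^'a \<Rightarrow> real^'a \<Rightarrow> real^'a \<Rightarrow> real^'a \<Rightarrow> real" where
  "Phi t V dg y v yb vb = ff t y v - gg t V yb - dg yb \<bullet> (y - yb)"

definition Psi :: "('a::finite \<Rightarrow> real \<Rightarrow> real \<Rightarrow> real) \<Rightarrow> ('a \<Rightarrow> real \<Rightarrow> real) \<Rightarrow> real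
    \<Rightarrow> (real^'a) set \<Rightarrow> (real^'a \<Rightarrow> real^'a) \<Rightarrow> real \<Rightarrow> real \<Rightarrow> real^'a \<Rightarrow> real^'a
    \<Rightarrow> real^'a \<Rightarrow> real^'a \<Rightarrow> real" where
  "Psi t G \<eta> V dg \<rho> \<beta> yk vk y v =
     FF t G \<eta> y v + \<rho> * Phi t V dg y v yk vk + \<rho> * \<beta> * (norm (y - yk, v - vk))\<^sup>2"

definition partially_optimal :: "('y \<Rightarrow> 'v \<Rightarrow> real) \<Rightarrow> 'v set \<Rightarrow> 'y set \<Rightarrow> 'y \<Rightarrow> 'v \<Rightarrow> bool" where
  "partially_optimal P V U y v \<longleftrightarrow>
     (\<forall>v'\<in>V. P y v \<le> P y v') \<and> (\<forall>y'\<in>U. P y v \<le> P y' v)"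

text \<open>AMA_iterates P V U y0 ys vs: the sequences ys j = y^{k,j}, vs j = v^{k,j} (j \<ge> 1) are
  iterates of algorithm AMA applied to the objective P (= Psi^k), as long as it has not stopped.\<close>
definition AMA_iterates :: "('y \<Rightarrow> 'v \<Rightarrow> real) \<Rightarrow> 'v set \<Rightarrow> 'y set \<Rightarrow> 'y
    \<Rightarrow> (nat \<Rightarrow> 'y) \<Rightarrow> (nat \<Rightarrow> 'v) \<Rightarrow> bool" where
  "AMA_iterates P V U y0 ys vs \<longleftrightarrow> ys 0 = y0 \<and>
     (\<forall>j. (\<forall>i<j. \<not> partially_optimal P V U (ys (Suc i)) (vs (Suc i))) \<longrightarrow>
          (vs (Suc j) \<in> V \<and> (\<forall>v\<in>V. P (ys j) (vs (Suc j)) \<le> P (ys j) v)) \<and>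
          (ys (Suc j) \<in> U \<and> (\<forall>y\<in>U. P (ys (Suc j)) (vs (Suc j)) \<le> P y (vs (Suc j)))))"

text \<open>AMA_output P V U y0 out: out is a possible output of AMA: the returned point if AMA stops,
  otherwise an accumulation point of its iterates (y^{k,j}, v^{k,j}), j \<ge> 1.\<close>
definition AMA_output :: "('y::topological_space \<Rightarrow> 'v::topological_space \<Rightarrow> real) \<Rightarrow> 'v set
    \<Rightarrow> 'y set \<Rightarrow> 'y \<Rightarrow> 'y \<times> 'v \<Rightarrow> bool" where
  "AMA_output P V U y0 out \<longleftrightarrow> (\<exists>ys vs. AMA_iterates P V U y0 ys vs \<and>
     (if \<exists>j. partially_optimal P V U (ys (Suc j)) (vs (Suc j))
      then (let j0 = (LEAST j. partially_optimal P V U (ys (Suc j)) (vs (Suc j)))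
            in out = (ys (Suc j0), vs (Suc j0)))
      else (\<exists>r::nat \<Rightarrow> nat. strict_mono r \<and>
              ((\<lambda>j. (ys (Suc (r j)), vs (Suc (r j)))) \<longlongrightarrow> out) sequentially)))"

end

theory Submission
  imports Defs
begin


lemma integral_stretch01:
  fixes f :: "real \<Rightarrow> real"
  assumes "0 \<le> v"
  shows "integral {0..v} f = v * integral {0..1} (\<lambda>s. f (v * s))"
proof (cases "v = 0")
  case True then show ?thesis by simp
next
  case False
  then have v: "v > 0" using assms by simp
  have img: "(\<lambda>x. x / v) ` {0..v} = {0..1}"
  proof
    show "(\<lambda>x. x / v) ` {0..v} \<subseteq> {0..1}" using v by (auto simp: field_simps)
    show "{0..1} \<subseteq> (\<lambda>x. x / v) ` {0..v}"
    proof
      fix s :: real assume s: "s \<in> {0..1}"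
      have "v * s \<in> {0..v}" using v s by (simp add: mult_le_cancel_left1)
      moreover have "s = (v * s) / v" using v by simp
      ultimately show "s \<in> (\<lambda>x. x / v) ` {0..v}" by blast
    qed
  qed
  have "integral ((\<lambda>x. x / v) ` {0..v}) (\<lambda>x. f (v * x)) = (1 / \<bar>v\<bar>) *\<^sub>R integral {0..v} f"
    by (rule integral_stretch_real) (use v in auto)
  then show ?thesis using v by (simp add: img)
qed

lemma C1_on_cont: "C1_on S f \<Longrightarrow> continuous_on S f"
  unfolding C1_on_def continuous_on_eq_continuous_within
  using has_derivative_continuous by blast
lemma integral_param_cont:
  fixes T :: "real \<Rightarrow> real \<Rightarrow> real"
  assumes cT: "continuous_on {p::real\<times>real. 0 \<le> fst p \<and> 0 \<le> snd p} (\<lambda>p. T (fst p) (snd p))"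
  shows "continuous_on {p::real\<times>real. 0 \<le> fst p \<and> 0 \<le> snd p} (\<lambda>p. integral {0..snd p} (T (fst p)))"
proof -
  define Q where "Q = {p::real\<times>real. 0 \<le> fst p \<and> 0 \<le> snd p}"
  have eq: "\<And>p. p \<in> Q \<Longrightarrow> integral {0..snd p} (T (fst p)) = snd p * integral (cbox 0 1) (\<lambda>s. T (fst p) (snd p * s))"
  proof -
    fix p assume "p \<in> Q"
    then have "0 \<le> snd p" unfolding Q_def by simp
    from integral_stretch01[OF this, of "T (fst p)"] show "integral {0..snd p} (T (fst p)) = snd p * integral (cbox 0 1) (\<lambda>s. T (fst p) (snd p * s))"
      by simp
  qed
  have sub: "(\<lambda>(p, s). (fst p, snd p * s)) ` (Q \<times> cbox 0 1) \<subseteq> Q"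
  proof
    fix x assume "x \<in> (\<lambda>(p, s). (fst p, snd p * (s::real))) ` (Q \<times> cbox 0 1)"
    then obtain ps where ps: "ps \<in> Q \<times> cbox 0 1" "x = (\<lambda>(p, s). (fst p, snd p * (s::real))) ps" by blast
    obtain p s where "ps = (p, s)" by (cases ps)
    with ps have "p \<in> Q" "0 \<le> s" "x = (fst p, snd p * s)" by auto
    then show "x \<in> Q" unfolding Q_def by auto
  qed
  have c1: "continuous_on (Q \<times> cbox 0 1) (\<lambda>(p::real\<times>real, s::real). (fst p, snd p * s))"
    unfolding case_prod_unfold by (intro continuous_intros)
  have "continuous_on (Q \<times> cbox 0 1) ((\<lambda>p. T (fst p) (snd p)) \<circ> (\<lambda>(p, s). (fst p, snd p * s)))"
    by (rule continuous_on_compose[OF c1 continuous_on_subset[OF cT[folded Q_def] sub]])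
  then have c2: "continuous_on (Q \<times> cbox 0 1) (\<lambda>(p, s). T (fst p) (snd p * s))"
    by (simp add: o_def case_prod_unfold)
  have "continuous_on Q (\<lambda>p. snd p * integral (cbox 0 1) (\<lambda>s. T (fst p) (snd p * s)))"
    by (intro continuous_intros integral_continuous_on_param[OF c2])
  then have "continuous_on Q (\<lambda>p. integral {0..snd p} (T (fst p)))"
    by (rule continuous_on_cong[THEN iffD1, rotated 2]) (use eq in auto)
  then show ?thesis by (simp add: Q_def)
qed


lemma Yset_closed: "closed (Yset u)"
  unfolding Yset_def by (intro closed_Collect_all closed_Collect_conj closed_Collect_le continuous_intros)

lemma Yset_bounded: "bounded (Yset (u::real^'a))"
  unfolding bounded_iff
proof (intro exI ballI)
  fix y assume y: "y \<in> Yset u"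
  have "norm y \<le> (\<Sum>a\<in>UNIV. \<bar>y$a\<bar>)" by (rule norm_le_l1_cart)
  also have "\<dots> \<le> (\<Sum>a\<in>UNIV. \<bar>u$a\<bar>)"
    using y by (intro sum_mono) (auto simp: Yset_def intro: order_trans[OF _ abs_ge_self])
  finally show "norm y \<le> (\<Sum>a\<in>UNIV. \<bar>u$a\<bar>)" .
qed

lemma Yset_convex: "convex (Yset u)"
  unfolding convex_def Yset_def by (auto intro: convex_bound_le)

lemma Upsilon_sub: "Upsilon u \<tau> \<subseteq> Yset u"
  unfolding Upsilon_def by auto

lemma Upsilon_closed: "closed (Upsilon u \<tau>)"
  unfolding closed_sequential_limits
proof (intro allI impI, elim conjE)
  fix x f assume f: "\<forall>n. f n \<in> Upsilon u \<tau>" and lim: "f \<longlonglongrightarrow> x"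
  have xY: "x \<in> Yset u"
    using closed_sequentially[OF Yset_closed[of u], of f x] f lim Upsilon_sub by blast
  have ev: "eventually (\<lambda>n. f n $ a > 0) sequentially" if xa: "x$a > 0" for a
  proof -
    have "(\<lambda>n. f n $ a) \<longlonglongrightarrow> x$a" by (rule tendsto_vec_nth[OF lim])
    from order_tendstoD(1)[OF this xa] show ?thesis .
  qed
  have "eventually (\<lambda>n. \<forall>a\<in>{a. x$a > 0}. f n $ a > 0) sequentially"
    by (rule eventually_ball_finite) (use ev in auto)
  then obtain N where N: "\<forall>n\<ge>N. \<forall>a\<in>{a. x$a > 0}. f n $ a > 0"
    unfolding eventually_sequentially by blast
  then have n: "\<forall>a\<in>{a. x$a > 0}. f N $ a > 0" by blast
  have "{a. x$a > 0} \<subseteq> {a. f N $ a > 0}" using n by blast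
  then have "card {a. x$a > 0} \<le> card {a. f N $ a > 0}"
    by (rule card_mono[rotated]) simp
  also have "\<dots> \<le> \<tau>" using f unfolding Upsilon_def by blast
  finally show "x \<in> Upsilon u \<tau>" using xY unfolding Upsilon_def by blast
qed

lemma Vset_nonneg:
  assumes Delta01: "\<forall>a r. Delta $ a $ r = 0 \<or> Delta $ a $ r = 1"
    and v: "v \<in> Vset Delta Lambda d"
  shows "0 \<le> v $ a"
proof -
  from v obtain h where h: "\<forall>r. 0 \<le> h $ r" "v = Delta *v h" unfolding Vset_def by auto
  have "0 \<le> Delta $ a $ r * h $ r" for r using Delta01 h(1) by (metis mult_eq_0_iff mult_nonneg_nonneg order_refl zero_le_one)
  then show ?thesis using h(2) by (simp add: matrix_vector_mult_def sum_nonneg)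
qed

lemma Vset_compact:
  fixes Delta :: "real^'r::finite^'a::finite" and Lambda :: "real^'r^'w::finite"
  assumes Lambda01: "\<forall>w r. Lambda $ w $ r = 0 \<or> Lambda $ w $ r = 1"
    and route_one_OD: "\<forall>r. \<exists>!w. Lambda $ w $ r = 1"
    and d_pos: "\<forall>w. d $ w > 0"
  shows "compact (Vset Delta Lambda d)"
proof -
  define H where "H = {h::real^'r. (\<forall>r. 0 \<le> h $ r) \<and> Lambda *v h = d}"
  have c1: "closed {h::real^'r. \<forall>r. 0 \<le> h $ r}"
    by (intro closed_Collect_all closed_Collect_le continuous_intros)
  have c2: "closed {h::real^'r. Lambda *v h = d}"
    by (intro closed_Collect_eq continuous_intros)
  have "H = {h::real^'r. \<forall>r. 0 \<le> h $ r} \<inter> {h::real^'r. Lambda *v h = d}" unfolding H_def by blast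
  then have "closed H" using c1 c2 by (simp add: closed_Int)
  moreover have "bounded H"
    unfolding bounded_iff
  proof (intro exI ballI)
    fix h assume h: "h \<in> H"
    have hb: "h $ r \<le> (\<Sum>w\<in>UNIV. d $ w)" for r
    proof -
      obtain w where w: "Lambda $ w $ r = 1" using route_one_OD by blast
      have nn: "0 \<le> Lambda $ w $ r' * h $ r'" for r'
      proof -
        have "0 \<le> Lambda $ w $ r'" using Lambda01 by (metis order_refl zero_le_one)
        moreover have "0 \<le> h $ r'" using h unfolding H_def by blast
        ultimately show ?thesis by simp
      qed
      have "h $ r = Lambda $ w $ r * h $ r" using w by simp
      also have "\<dots> \<le> (\<Sum>r'\<in>UNIV. Lambda $ w $ r' * h $ r')"
        by (rule member_le_sum) (use nn in simp_all)
      also have "\<dots> = (Lambda *v h) $ w" by (simp add: matrix_vector_mult_def)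
      also have "\<dots> = d $ w" using h unfolding H_def by simp
      also have "\<dots> \<le> (\<Sum>w\<in>UNIV. d $ w)"
        by (rule member_le_sum) (use d_pos in \<open>simp_all add: less_imp_le\<close>)
      finally show ?thesis .
    qed
    have "norm h \<le> (\<Sum>r\<in>UNIV. \<bar>h$r\<bar>)" by (rule norm_le_l1_cart)
    also have "\<dots> \<le> (\<Sum>r\<in>(UNIV::'r set). (\<Sum>w\<in>UNIV. d $ w))"
    proof (rule sum_mono)
      fix r show "\<bar>h$r\<bar> \<le> (\<Sum>w\<in>UNIV. d $ w)" using h hb[of r] unfolding H_def by simp
    qed
    finally show "norm h \<le> (\<Sum>r\<in>(UNIV::'r set). (\<Sum>w\<in>UNIV. d $ w))" .
  qed
  ultimately have "compact H" by (simp add: compact_eq_bounded_closed)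
  then have "compact ((*v) Delta ` H)"
    by (intro compact_continuous_image continuous_intros)
  moreover have "(*v) Delta ` H = Vset Delta Lambda d"
    unfolding H_def Vset_def by blast
  ultimately show ?thesis by simp
qed



lemma AMA_key:
  fixes P :: "'y::metric_space \<Rightarrow> 'v::metric_space \<Rightarrow> real"
  assumes cU: "closed U" and cV: "closed V"
    and cont: "continuous_on (U \<times> V) (\<lambda>z. P (fst z) (snd z))"
    and y0: "y0 \<in> U"
    and out: "AMA_output P V U y0 out"
  shows "fst out \<in> U \<and> snd out \<in> V \<and> (\<forall>v\<in>V. P (fst out) (snd out) \<le> P y0 v)"
proof -
  obtain ys vs where it: "AMA_iterates P V U y0 ys vs" and
    cs: "if \<exists>j. partially_optimal P V U (ys (Suc j)) (vs (Suc j))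
      then (let j0 = (LEAST j. partially_optimal P V U (ys (Suc j)) (vs (Suc j)))
            in out = (ys (Suc j0), vs (Suc j0)))
      else (\<exists>r::nat \<Rightarrow> nat. strict_mono r \<and>
              ((\<lambda>j. (ys (Suc (r j)), vs (Suc (r j)))) \<longlongrightarrow> out) sequentially)"
    using out unfolding AMA_output_def by blast
  define po where "po j = partially_optimal P V U (ys (Suc j)) (vs (Suc j))" for j
  have ys0: "ys 0 = y0" using it unfolding AMA_iterates_def by blast
  have step: "\<And>j. (\<forall>i<j. \<not> po i) \<Longrightarrow>
          (vs (Suc j) \<in> V \<and> (\<forall>v\<in>V. P (ys j) (vs (Suc j)) \<le> P (ys j) v)) \<and>
          (ys (Suc j) \<in> U \<and> (\<forall>y\<in>U. P (ys (Suc j)) (vs (Suc j)) \<le> P y (vs (Suc j))))"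
    using it unfolding AMA_iterates_def po_def by blast
  have bound: "(\<forall>i<j. \<not> po i) \<Longrightarrow> ys (Suc j) \<in> U \<and> vs (Suc j) \<in> V \<and>
       (\<forall>v\<in>V. P (ys (Suc j)) (vs (Suc j)) \<le> P y0 v)" for j
  proof (induction j)
    case 0
    from step[of 0] have s: "vs (Suc 0) \<in> V" "\<forall>v\<in>V. P (ys 0) (vs (Suc 0)) \<le> P (ys 0) v"
      "ys (Suc 0) \<in> U" "\<forall>y\<in>U. P (ys (Suc 0)) (vs (Suc 0)) \<le> P y (vs (Suc 0))" by auto
    have "P (ys (Suc 0)) (vs (Suc 0)) \<le> P (ys 0) (vs (Suc 0))" using s(4) y0 ys0 by auto
    then show ?case using s(1,2,3) ys0 by force
  next
    case (Suc j)
    then have IH: "ys (Suc j) \<in> U" "vs (Suc j) \<in> V" "\<forall>v\<in>V. P (ys (Suc j)) (vs (Suc j)) \<le> P y0 v"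
      by auto
    from step[of "Suc j"] Suc.prems have s: "vs (Suc (Suc j)) \<in> V"
      "\<forall>v\<in>V. P (ys (Suc j)) (vs (Suc (Suc j))) \<le> P (ys (Suc j)) v"
      "ys (Suc (Suc j)) \<in> U" "\<forall>y\<in>U. P (ys (Suc (Suc j))) (vs (Suc (Suc j))) \<le> P y (vs (Suc (Suc j)))"
      by auto
    have "P (ys (Suc (Suc j))) (vs (Suc (Suc j))) \<le> P (ys (Suc j)) (vs (Suc (Suc j)))"
      using s(4) IH(1) by blast
    also have "\<dots> \<le> P (ys (Suc j)) (vs (Suc j))" using s(2) IH(2) by blast
    finally show ?case using IH(3) s(1,3) by force
  qed
  show ?thesis
  proof (cases "\<exists>j. po j")
    case True
    define j0 where "j0 = (LEAST j. po j)"
    have "out = (ys (Suc j0), vs (Suc j0))"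
      using cs True unfolding j0_def po_def by (simp add: Let_def)
    moreover have "\<forall>i<j0. \<not> po i" unfolding j0_def using not_less_Least by blast
    ultimately show ?thesis using bound[of j0] by simp
  next
    case False
    then obtain r :: "nat \<Rightarrow> nat" where lim: "((\<lambda>j. (ys (Suc (r j)), vs (Suc (r j)))) \<longlongrightarrow> out) sequentially"
      using cs unfolding po_def by auto
    have B: "\<And>j. ys (Suc j) \<in> U \<and> vs (Suc j) \<in> V \<and> (\<forall>v\<in>V. P (ys (Suc j)) (vs (Suc j)) \<le> P y0 v)"
      using bound False by blast
    have inUV: "\<And>j. (ys (Suc (r j)), vs (Suc (r j))) \<in> U \<times> V" using B by auto
    have outUV: "out \<in> U \<times> V"
      by (rule closed_sequentially[OF closed_Times[OF cU cV] inUV lim])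
    have L0: "(\<lambda>j. (\<lambda>z. P (fst z) (snd z)) ((\<lambda>j. (ys (Suc (r j)), vs (Suc (r j)))) j)) \<longlonglongrightarrow> (\<lambda>z. P (fst z) (snd z)) out"
      by (rule continuous_on_tendsto_compose[OF cont lim outUV]) (use inUV in simp)
    then have L: "(\<lambda>j. P (ys (Suc (r j))) (vs (Suc (r j)))) \<longlonglongrightarrow> P (fst out) (snd out)"
      by simp
    have "\<forall>v\<in>V. P (fst out) (snd out) \<le> P y0 v"
    proof
      fix v assume v: "v \<in> V"
      show "P (fst out) (snd out) \<le> P y0 v"
        by (rule LIMSEQ_le_const2[OF L]) (use B v in blast)
    qed
    then show ?thesis using outUV by auto
  qed
qed



lemma convex_tangent:
  fixes g :: "'n::real_inner \<Rightarrow> real"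
  assumes S: "convex S" and cg: "convex_on S g"
    and dg: "(g has_derivative (\<lambda>h. D \<bullet> h)) (at x within S)"
    and x: "x \<in> S" and y: "y \<in> S"
  shows "g x + D \<bullet> (y - x) \<le> g y"
proof -
  define p where "p s = x + s *\<^sub>R (y - x)" for s :: real
  have pS: "p ` {0..1} \<subseteq> S"
  proof
    fix z assume "z \<in> p ` {0..1}"
    then obtain s where s: "s \<in> {0..1}" "z = p s" by blast
    have "z = (1 - s) *\<^sub>R x + s *\<^sub>R y" using s by (simp add: p_def algebra_simps)
    then show "z \<in> S" using s S x y by (simp add: convex_def)
  qed
  have p0: "p 0 = x" by (simp add: p_def)
  have dp: "(p has_derivative (\<lambda>s. s *\<^sub>R (y - x))) (at 0 within {0..1})"
    unfolding p_def by (auto intro!: derivative_eq_intros)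
  have dg': "(g has_derivative (\<lambda>h. D \<bullet> h)) (at (p 0) within (p ` {0..1}))"
    using has_derivative_subset[OF dg pS] p0 by simp
  have "((\<lambda>s. g (p s)) has_derivative (\<lambda>s. D \<bullet> (s *\<^sub>R (y - x)))) (at 0 within {0..1})"
    by (rule has_derivative_in_compose[OF dp dg'])
  moreover have "(\<lambda>s. D \<bullet> (s *\<^sub>R (y - x))) = (*) (D \<bullet> (y - x))"
    by (auto simp: inner_scaleR_right)
  ultimately have "((\<lambda>s. g (p s)) has_field_derivative (D \<bullet> (y - x))) (at 0 within {0..1})"
    unfolding has_field_derivative_def by simp
  then have lim: "((\<lambda>s. (g (p s) - g (p 0)) / (s - 0)) \<longlongrightarrow> D \<bullet> (y - x)) (at_right 0)"
    unfolding has_field_derivative_iff by (simp add: at_within_Icc_at_right)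
  have ev: "eventually (\<lambda>s. (g (p s) - g (p 0)) / (s - 0) \<le> g y - g x) (at_right (0::real))"
  proof -
    have "eventually (\<lambda>s. s \<in> {0<..<1}) (at_right (0::real))"
      by (rule eventually_at_right_real) simp
    then show ?thesis
    proof eventually_elim
      case (elim s)
      then have s: "0 < s" "s < 1" by auto
      have "g (p s) = g ((1 - s) *\<^sub>R x + s *\<^sub>R y)" by (simp add: p_def algebra_simps)
      also have "\<dots> \<le> (1 - s) * g x + s * g y"
        using convex_onD[OF cg, of s x y] s x y by simp
      finally have "g (p s) - g x \<le> s * (g y - g x)" by (simp add: algebra_simps)
      then show ?case using s p0 by (simp add: divide_le_eq mult.commute)
    qed
  qed
  have "D \<bullet> (y - x) \<le> g y - g x"
    by (rule tendsto_upperbound[OF lim ev]) simp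
  then show ?thesis by simp
qed

definition Q2 :: "((real^'a) \<times> (real^'a)) set" where
  "Q2 = {p. \<forall>a. 0 \<le> fst p $ a \<and> 0 \<le> snd p $ a}"

lemma comp_cont:
  fixes T :: "real \<Rightarrow> real \<Rightarrow> real"
  assumes "continuous_on {p::real\<times>real. 0 \<le> fst p \<and> 0 \<le> snd p} (\<lambda>p. T (fst p) (snd p))"
  shows "continuous_on (Q2::((real^'a) \<times> (real^'a)) set) (\<lambda>p. T (fst p $ a) (snd p $ a))"
proof -
  have "continuous_on Q2 (\<lambda>p::(real^'a) \<times> (real^'a). (\<lambda>q. T (fst q) (snd q)) ((\<lambda>p. (fst p $ a, snd p $ a)) p))"
    by (rule continuous_on_compose2[OF assms]) (auto simp: Q2_def intro!: continuous_intros)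
  then show ?thesis by simp
qed

lemma ff_cont:
  assumes "\<forall>a. continuous_on {p::real\<times>real. 0 \<le> fst p \<and> 0 \<le> snd p} (\<lambda>p. t a (fst p) (snd p))"
  shows "continuous_on Q2 (\<lambda>p. ff t (fst p) (snd p))"
proof -
  have "continuous_on Q2 (\<lambda>p::(real^'a) \<times> (real^'a). integral {0..snd p $ a} (t a (fst p $ a)))" for a
    using comp_cont[OF integral_param_cont[OF assms[rule_format, of a]], where a=a] by simp
  then show ?thesis unfolding ff_def by (intro continuous_on_sum) auto
qed

lemma FF_cont:
  assumes "\<forall>a. continuous_on {p::real\<times>real. 0 \<le> fst p \<and> 0 \<le> snd p} (\<lambda>p. t a (fst p) (snd p))"
    and "\<forall>a. continuous_on {0..} (G a)"
  shows "continuous_on Q2 (\<lambda>p. FF t G \<eta> (fst p) (snd p))"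
proof -
  have c1: "continuous_on Q2 (\<lambda>p::(real^'a) \<times> (real^'a). t a (fst p $ a) (snd p $ a))" for a
    using comp_cont[OF assms(1)[rule_format, of a], where a=a] by simp
  have c2: "continuous_on Q2 (\<lambda>p::(real^'a) \<times> (real^'a). G a (fst p $ a))" for a
    by (rule continuous_on_compose2[OF assms(2)[rule_format, of a]]) (auto simp: Q2_def intro!: continuous_intros)
  show ?thesis unfolding FF_def
    by (intro continuous_intros continuous_on_sum c1 c2)
qed

lemma Psi_cont:
  assumes "\<forall>a. continuous_on {p::real\<times>real. 0 \<le> fst p \<and> 0 \<le> snd p} (\<lambda>p. t a (fst p) (snd p))"
    and "\<forall>a. continuous_on {0..} (G a)"
  shows "continuous_on Q2 (\<lambda>p. Psi t G \<eta> V dg \<rho> \<beta> yk vk (fst p) (snd p))"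
  unfolding Psi_def Phi_def
  by (intro continuous_intros FF_cont[OF assms] ff_cont[OF assms(1)])


lemma cont_bound:
  fixes f :: "'x::topological_space \<Rightarrow> real"
  assumes "compact K" "continuous_on K f"
  shows "\<exists>B. \<forall>x\<in>K. \<bar>f x\<bar> \<le> B"
proof -
  have "bounded (f ` K)" by (rule compact_imp_bounded[OF compact_continuous_image[OF assms(2,1)]])
  then obtain B where "\<forall>y\<in>f ` K. norm y \<le> B" unfolding bounded_iff by blast
  then show ?thesis by auto
qed

lemma norm_pair_sq: "(norm (a, b))\<^sup>2 = (norm a)\<^sup>2 + (norm b)\<^sup>2"
  by (simp add: norm_Pair)

lemma Yset_compact: "compact (Yset (u::real^'a::finite))"
  using Yset_bounded[of u] Yset_closed[of u] by (simp add: compact_eq_bounded_closed)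

lemma Yset_nonneg: "y \<in> Yset u \<Longrightarrow> 0 \<le> y $ a"
  unfolding Yset_def by blast



theorem proposition4p4:
  fixes Delta :: "real^'r::finite^'a::finite" and Lambda :: "real^'r^'w::finite"
    and d :: "real^'w" and u :: "real^'a" and \<tau> :: nat
    and t :: "'a \<Rightarrow> real \<Rightarrow> real \<Rightarrow> real" and G :: "'a \<Rightarrow> real \<Rightarrow> real" and \<eta> :: real
    and dg :: "real^'a \<Rightarrow> real^'a"
    and \<epsilon>1 \<epsilon>2 \<epsilon>3 \<theta>l \<theta>u \<rho>0 \<sigma> :: real and y0 :: "real^'a"
    and ys vs :: "nat \<Rightarrow> real^'a" and \<rho> \<beta> :: "nat \<Rightarrow> real"
  assumes Delta01: "\<forall>a r. Delta $ a $ r = 0 \<or> Delta $ a $ r = 1"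
    and Lambda01: "\<forall>w r. Lambda $ w $ r = 0 \<or> Lambda $ w $ r = 1"
    and route_one_OD: "\<forall>r. \<exists>!w. Lambda $ w $ r = 1"
    and OD_has_route: "\<forall>w. \<exists>r. Lambda $ w $ r = 1"
    and d_pos: "\<forall>w. d $ w > 0"
    and u_nonneg: "\<forall>a. u $ a \<ge> 0"
    and tau: "1 \<le> \<tau>" "\<tau> \<le> CARD('a)"
    and t_C1: "\<forall>a. C1_on {p. 0 \<le> fst p \<and> 0 \<le> snd p} (\<lambda>p. t a (fst p) (snd p))"
    and t_incr: "\<forall>a ya v1 v2. 0 \<le> ya \<and> 0 \<le> v1 \<and> v1 < v2 \<longrightarrow> t a ya v1 < t a ya v2"
    and G_nonneg: "\<forall>a x. 0 \<le> x \<longrightarrow> 0 \<le> G a x"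
    and G_C1: "\<forall>a. C1_on {0..} (G a)"
    and G_incr: "\<forall>a. strict_mono_on {0..} (G a)"
    and G_convex: "\<forall>a. convex_on {0..} (G a)"
    and int_convex: "\<forall>a. convex_on {p. 0 \<le> fst p \<and> 0 \<le> snd p}
                            (\<lambda>p. integral {0..snd p} (\<lambda>w. t a (fst p) w))"
    and tv_convex: "\<forall>a. convex_on {p. 0 \<le> fst p \<and> 0 \<le> snd p}
                            (\<lambda>p. t a (fst p) (snd p) * snd p)"
    and eta: "\<eta> > 0"
    and g_convex: "convex_on (Yset u) (gg t (Vset Delta Lambda d))"
    and g_grad: "\<forall>y\<in>Yset u. (gg t (Vset Delta Lambda d) has_derivative (\<lambda>h. dg y \<bullet> h))
                               (at y within Yset u)"
    and g_grad_cont: "continuous_on (Yset u) dg"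
    and params: "\<epsilon>1 > 0" "\<epsilon>2 > 0" "\<epsilon>3 > 0" "0 < \<theta>l" "\<theta>l < \<theta>u" "\<rho>0 > 0" "\<sigma> > 1"
    and y0: "y0 \<in> Upsilon u \<tau>"
    and init: "ys 0 = y0" "vs 0 \<in> Vstar t (Vset Delta Lambda d) y0" "\<rho> 0 = \<rho>0"
              "\<theta>l / \<rho>0 \<le> \<beta> 0" "\<beta> 0 \<le> \<theta>u / \<rho>0"
    and iter: "\<forall>k. (\<forall>i<k. \<not> (norm (ys (Suc i) - ys i) \<le> \<epsilon>1 \<and> norm (vs (Suc i) - vs i) \<le> \<epsilon>2 \<and>
                    Phi t (Vset Delta Lambda d) dg (ys (Suc i)) (vs (Suc i)) (ys i) (vs i) \<le> \<epsilon>3))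
           \<longrightarrow> AMA_output (Psi t G \<eta> (Vset Delta Lambda d) dg (\<rho> k) (\<beta> k) (ys k) (vs k))
                 (Vset Delta Lambda d) (Upsilon u \<tau>) (ys k) (ys (Suc k), vs (Suc k))
             \<and> (\<not> (norm (ys (Suc k) - ys k) \<le> \<epsilon>1 \<and> norm (vs (Suc k) - vs k) \<le> \<epsilon>2 \<and>
                    Phi t (Vset Delta Lambda d) dg (ys (Suc k)) (vs (Suc k)) (ys k) (vs k) \<le> \<epsilon>3)
                \<longrightarrow> \<rho> (Suc k) = (if Phi t (Vset Delta Lambda d) dg (ys (Suc k)) (vs (Suc k)) (ys k) (vs k) > \<epsilon>3
                                  then \<sigma> * \<rho> k else \<rho> k)
                  \<and> \<theta>l / \<rho> (Suc k) \<le> \<beta> (Suc k) \<and> \<beta> (Suc k) \<le> \<theta>u / \<rho> (Suc k))"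
  shows "\<exists>k. norm (ys (Suc k) - ys k) \<le> \<epsilon>1 \<and> norm (vs (Suc k) - vs k) \<le> \<epsilon>2 \<and>
             Phi t (Vset Delta Lambda d) dg (ys (Suc k)) (vs (Suc k)) (ys k) (vs k) \<le> \<epsilon>3"
  proof (rule ccontr)
  assume NS0: "\<not> ?thesis"
  define V where "V = Vset Delta Lambda d"
  define U where "U = Upsilon u \<tau>"
  define Y where "Y = Yset u"
  define Ph where "Ph k = Phi t V dg (ys (Suc k)) (vs (Suc k)) (ys k) (vs k)" for k
  define P where "P k = Psi t G \<eta> V dg (\<rho> k) (\<beta> k) (ys k) (vs k)" for k
  define Q where "Q = {p::real\<times>real. 0 \<le> fst p \<and> 0 \<le> snd p}"
  have NS: "\<And>k. \<not> (norm (ys (Suc k) - ys k) \<le> \<epsilon>1 \<and> norm (vs (Suc k) - vs k) \<le> \<epsilon>2 \<and> Ph k \<le> \<epsilon>3)"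
    using NS0 unfolding Ph_def V_def by blast
  have iterk: "AMA_output (P k) V U (ys k) (ys (Suc k), vs (Suc k)) \<and>
       \<rho> (Suc k) = (if Ph k > \<epsilon>3 then \<sigma> * \<rho> k else \<rho> k) \<and>
       \<theta>l / \<rho> (Suc k) \<le> \<beta> (Suc k) \<and> \<beta> (Suc k) \<le> \<theta>u / \<rho> (Suc k)" for k
  proof -
    have "\<forall>i<k. \<not> (norm (ys (Suc i) - ys i) \<le> \<epsilon>1 \<and> norm (vs (Suc i) - vs i) \<le> \<epsilon>2 \<and>
                    Phi t (Vset Delta Lambda d) dg (ys (Suc i)) (vs (Suc i)) (ys i) (vs i) \<le> \<epsilon>3)"
      using NS unfolding Ph_def V_def by blast
    moreover have "\<not> (norm (ys (Suc k) - ys k) \<le> \<epsilon>1 \<and> norm (vs (Suc k) - vs k) \<le> \<epsilon>2 \<and>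
                    Phi t (Vset Delta Lambda d) dg (ys (Suc k)) (vs (Suc k)) (ys k) (vs k) \<le> \<epsilon>3)"
      using NS unfolding Ph_def V_def by blast
    ultimately show ?thesis using iter[rule_format, of k] unfolding Ph_def V_def U_def P_def by blast
  qed
  have IT: "\<And>k. AMA_output (P k) V U (ys k) (ys (Suc k), vs (Suc k))" using iterk by blast
  have RU: "\<And>k. \<rho> (Suc k) = (if Ph k > \<epsilon>3 then \<sigma> * \<rho> k else \<rho> k)" using iterk by blast
  have BB: "\<And>k. \<theta>l / \<rho> (Suc k) \<le> \<beta> (Suc k) \<and> \<beta> (Suc k) \<le> \<theta>u / \<rho> (Suc k)" using iterk by blast
  have tc: "\<forall>a. continuous_on Q (\<lambda>p. t a (fst p) (snd p))"
    using t_C1 C1_on_cont unfolding Q_def by blast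
  have Gc: "\<forall>a. continuous_on {0..} (G a)"
    using G_C1 C1_on_cont by blast
  have cV: "compact V" unfolding V_def by (rule Vset_compact[OF Lambda01 route_one_OD d_pos])
  have clV: "closed V" using cV by (rule compact_imp_closed)
  have clU: "closed U" unfolding U_def by (rule Upsilon_closed)
  have UY: "U \<subseteq> Y" unfolding U_def Y_def by (rule Upsilon_sub)
  have cY: "compact Y" unfolding Y_def by (rule Yset_compact)
  have Vnn: "\<And>v a. v \<in> V \<Longrightarrow> 0 \<le> v $ a" unfolding V_def using Vset_nonneg[OF Delta01] by blast
  have YVQ: "Y \<times> V \<subseteq> Q2" unfolding Q2_def Y_def using Yset_nonneg Vnn by auto
  have cYV: "compact (Y \<times> V)" using cY cV by (rule compact_Times)
  have contP: "continuous_on (U \<times> V) (\<lambda>z. P k (fst z) (snd z))" for k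
  proof -
    have "continuous_on Q2 (\<lambda>z. P k (fst z) (snd z))"
      unfolding P_def by (rule Psi_cont[OF tc[unfolded Q_def] Gc])
    then show ?thesis by (rule continuous_on_subset) (use YVQ UY in auto)
  qed
  obtain Bf where Bf: "\<forall>z\<in>Y \<times> V. \<bar>FF t G \<eta> (fst z) (snd z)\<bar> \<le> Bf"
    using cont_bound[OF cYV continuous_on_subset[OF FF_cont[OF tc[unfolded Q_def] Gc] YVQ]] by blast
  obtain Bff where Bff: "\<forall>z\<in>Y \<times> V. \<bar>ff t (fst z) (snd z)\<bar> \<le> Bff"
    using cont_bound[OF cYV continuous_on_subset[OF ff_cont[OF tc[unfolded Q_def]] YVQ]] by blast
  obtain Bv where Bv: "\<forall>v\<in>V. norm v \<le> Bv"
    using compact_imp_bounded[OF cV] unfolding bounded_iff by blast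
  define Dv where "Dv = 2 * Bv"
  have Dv: "\<And>v w. v \<in> V \<Longrightarrow> w \<in> V \<Longrightarrow> norm (v - w) \<le> Dv"
  proof -
    fix v w assume "v \<in> V" "w \<in> V"
    then have "norm v \<le> Bv" "norm w \<le> Bv" using Bv by auto
    then show "norm (v - w) \<le> Dv" unfolding Dv_def using norm_triangle_ineq4[of v w] by linarith
  qed
  have V0: "vs 0 \<in> V" using init(2) unfolding Vstar_def V_def by blast
  have Vne: "V \<noteq> {}" using V0 by blast
  have bddg: "bdd_below (ff t y ` V)" if "y \<in> Y" for y
  proof -
    have "\<forall>x\<in>ff t y ` V. - Bff \<le> x" using Bff that by force
    then show ?thesis unfolding bdd_below_def by blast
  qed
  have gle: "gg t V y \<le> ff t y v" if "y \<in> Y" "v \<in> V" for y v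
    unfolding gg_def by (rule cINF_lower[OF bddg[OF that(1)] that(2)])
  have gapprox: "\<exists>v\<in>V. ff t y v < gg t V y + e" if "y \<in> Y" "e > 0" for y e
  proof -
    have "Inf (ff t y ` V) < gg t V y + e" unfolding gg_def using that(2) by simp
    then show ?thesis using cInf_less_iff[of "ff t y ` V"] Vne bddg[OF that(1)] by auto
  qed
  have inUV: "ys k \<in> U \<and> vs k \<in> V" for k
  proof (induction k)
    case 0 then show ?case using y0 V0 init(1) unfolding U_def by simp
  next
    case (Suc k)
    from AMA_key[OF clU clV contP Suc[THEN conjunct1] IT[of k]] show ?case by simp
  qed
  have desc: "\<And>k v. v \<in> V \<Longrightarrow> P k (ys (Suc k)) (vs (Suc k)) \<le> P k (ys k) v"
    using AMA_key[OF clU clV contP inUV[THEN conjunct1] IT] by simp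
  have inY: "\<And>k. ys k \<in> Y" using inUV UY by blast
  have rpos: "\<rho> k > 0" for k
  proof (induction k)
    case 0 then show ?case using init(3) params(6) by simp
  next
    case (Suc k) then show ?case using RU[of k] params(7) by simp
  qed
  have rmono: "\<rho> k \<le> \<rho> (Suc k)" for k
    using RU[of k] params(7) rpos[of k] by simp
  have rb: "\<theta>l \<le> \<rho> k * \<beta> k \<and> \<rho> k * \<beta> k \<le> \<theta>u" for k
  proof (cases k)
    case 0
    then show ?thesis using init(3,4,5) params(6)
      by (simp add: pos_divide_le_eq pos_le_divide_eq mult.commute)
  next
    case (Suc j)
    then show ?thesis using BB[of j] rpos[of k]
      by (simp add: pos_divide_le_eq pos_le_divide_eq mult.commute)
  qed
  have Pexp: "P k y v = FF t G \<eta> y v + \<rho> k * (ff t y v - gg t V (ys k) - dg (ys k) \<bullet> (y - ys k))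
       + \<rho> k * \<beta> k * ((norm (y - ys k))\<^sup>2 + (norm (v - vs k))\<^sup>2)" for k y v
    unfolding P_def Psi_def Phi_def by (simp add: norm_pair_sq)
  have PhE: "Ph k = ff t (ys (Suc k)) (vs (Suc k)) - gg t V (ys k) - dg (ys k) \<bullet> (ys (Suc k) - ys k)" for k
    unfolding Ph_def Phi_def by simp
  define C where "C = 2 * Bf + \<theta>u * Dv\<^sup>2"
  have step1: "\<rho> k * Ph k \<le> C + \<rho> k * (\<epsilon>3 / 2)" for k
  proof -
    obtain v where v: "v \<in> V" "ff t (ys k) v < gg t V (ys k) + \<epsilon>3 / 2"
      using gapprox[OF inY[of k], of "\<epsilon>3/2"] params(3) by auto
    have zk1: "(ys (Suc k), vs (Suc k)) \<in> Y \<times> V" using inY inUV by auto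
    have zkv: "(ys k, v) \<in> Y \<times> V" using inY v by auto
    have F1: "- Bf \<le> FF t G \<eta> (ys (Suc k)) (vs (Suc k))" using Bf zk1 by force
    have F2: "FF t G \<eta> (ys k) v \<le> Bf" using Bf zkv by force
    have nn: "0 \<le> \<rho> k * \<beta> k * ((norm (ys (Suc k) - ys k))\<^sup>2 + (norm (vs (Suc k) - vs k))\<^sup>2)"
      using rb[of k] params(4) by simp
    have lhs: "P k (ys (Suc k)) (vs (Suc k)) \<ge> - Bf + \<rho> k * Ph k"
      using Pexp[of k "ys (Suc k)" "vs (Suc k)"] PhE[of k] F1 nn by simp
    have dvk: "(norm (v - vs k))\<^sup>2 \<le> Dv\<^sup>2"
      using Dv[OF v(1) inUV[THEN conjunct2, of k]] by (simp add: power_mono)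
    have "\<rho> k * \<beta> k * (norm (v - vs k))\<^sup>2 \<le> \<theta>u * Dv\<^sup>2"
      using rb[of k] dvk params(4) by (meson mult_mono order_trans zero_le_power2 less_imp_le)
    moreover have "\<rho> k * (ff t (ys k) v - gg t V (ys k)) \<le> \<rho> k * (\<epsilon>3 / 2)"
      using v(2) rpos[of k] by simp
    ultimately have rhs: "P k (ys k) v \<le> Bf + \<rho> k * (\<epsilon>3 / 2) + \<theta>u * Dv\<^sup>2"
      using Pexp[of k "ys k" v] F2 by simp
    show ?thesis using lhs rhs desc[OF v(1), of k] unfolding C_def by linarith
  qed
  define R where "R = max \<rho>0 (\<sigma> * (2 * C / \<epsilon>3))"
  have incr_small: "Ph k > \<epsilon>3 \<Longrightarrow> \<rho> k \<le> 2 * C / \<epsilon>3" for k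
  proof -
    assume "Ph k > \<epsilon>3"
    then have "\<rho> k * \<epsilon>3 < \<rho> k * Ph k" using rpos[of k] by simp
    then have "\<rho> k * \<epsilon>3 < 2 * C" using step1[of k] by linarith
    then show ?thesis using params(3) by (simp add: pos_le_divide_eq)
  qed
  have rR: "\<rho> k \<le> R" for k
  proof (induction k)
    case 0 then show ?case using init(3) unfolding R_def by simp
  next
    case (Suc k)
    show ?case
    proof (cases "Ph k > \<epsilon>3")
      case True
      then have "\<rho> (Suc k) = \<sigma> * \<rho> k" using RU[of k] by simp
      also have "\<dots> \<le> \<sigma> * (2 * C / \<epsilon>3)" using mult_left_mono[OF incr_small[OF True], of \<sigma>] params(7) by simp
      finally show ?thesis unfolding R_def by simp
    next
      case False
      then show ?thesis using RU[of k] Suc by simp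
    qed
  qed
  have rmono': "\<And>k k'. k \<le> k' \<Longrightarrow> \<rho> k \<le> \<rho> k'"
    using rmono by (metis incseq_SucI incseq_def)
  obtain K where K: "\<And>k. k \<ge> K \<Longrightarrow> Ph k \<le> \<epsilon>3"
  proof -
    have "\<exists>K. \<forall>k\<ge>K. Ph k \<le> \<epsilon>3"
    proof (rule ccontr)
      assume "\<not> (\<exists>K. \<forall>k\<ge>K. Ph k \<le> \<epsilon>3)"
      then have inf: "\<forall>K. \<exists>k\<ge>K. Ph k > \<epsilon>3" by (auto simp: not_le)
      have grow: "\<exists>k. \<rho> k \<ge> \<sigma> ^ n * \<rho>0" for n
      proof (induction n)
        case 0 then show ?case using init(3) by auto
      next
        case (Suc n)
        then obtain k where k: "\<rho> k \<ge> \<sigma> ^ n * \<rho>0" by blast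
        obtain k' where k': "k' \<ge> k" "Ph k' > \<epsilon>3" using inf by blast
        have "\<rho> (Suc k') = \<sigma> * \<rho> k'" using RU[of k'] k'(2) by simp
        moreover have "\<sigma> * \<rho> k' \<ge> \<sigma> * (\<sigma> ^ n * \<rho>0)"
          using rmono'[OF k'(1)] k params(7) by (simp add: order_trans)
        ultimately show ?case by (metis power_Suc mult.assoc)
      qed
      obtain n where n: "R / \<rho>0 < \<sigma> ^ n" using real_arch_pow[OF params(7)] by blast
      then have "R < \<sigma> ^ n * \<rho>0" using params(6) by (simp add: pos_divide_less_eq)
      moreover obtain k where "\<rho> k \<ge> \<sigma> ^ n * \<rho>0" using grow by blast
      ultimately show False using rR[of k] by linarith
    qed
    then show ?thesis using that by blast
  qed
  define M where "M k = FF t G \<eta> (ys k) (vs k) + \<rho> k * (ff t (ys k) (vs k) - gg t V (ys k))" for k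
  define Dl where "Dl k = (norm (ys (Suc k) - ys k))\<^sup>2 + (norm (vs (Suc k) - vs k))\<^sup>2" for k
  have Mlow: "M k \<ge> - Bf" for k
  proof -
    have "(ys k, vs k) \<in> Y \<times> V" using inY inUV by auto
    then have "- Bf \<le> FF t G \<eta> (ys k) (vs k)" using Bf by force
    moreover have "0 \<le> \<rho> k * (ff t (ys k) (vs k) - gg t V (ys k))"
      using gle[OF inY inUV[THEN conjunct2]] rpos[of k] by simp
    ultimately show ?thesis unfolding M_def by linarith
  qed
  have Mdesc: "M (Suc k) + \<theta>l * Dl k \<le> M k" if kK: "k \<ge> K" for k
  proof -
    have r: "\<rho> (Suc k) = \<rho> k" using RU[of k] K[OF kK] by simp
    have tang: "gg t V (ys k) + dg (ys k) \<bullet> (ys (Suc k) - ys k) \<le> gg t V (ys (Suc k))"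
      by (rule convex_tangent[OF Yset_convex g_convex[folded V_def] g_grad[folded V_def, rule_format]])
         (use inY in \<open>auto simp: Y_def\<close>)
    have PhG: "Ph k \<ge> ff t (ys (Suc k)) (vs (Suc k)) - gg t V (ys (Suc k))"
      using PhE[of k] tang by simp
    have "\<rho> k * (ff t (ys (Suc k)) (vs (Suc k)) - gg t V (ys (Suc k))) \<le> \<rho> k * Ph k"
      using PhG rpos[of k] by simp
    moreover have "\<theta>l * Dl k \<le> \<rho> k * \<beta> k * Dl k"
      using rb[of k] unfolding Dl_def by (simp add: mult_right_mono)
    ultimately have "M (Suc k) + \<theta>l * Dl k \<le> P k (ys (Suc k)) (vs (Suc k))"
      using Pexp[of k "ys (Suc k)" "vs (Suc k)"] PhE[of k] r unfolding M_def Dl_def by simp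
    also have "\<dots> \<le> P k (ys k) (vs k)" using desc inUV by blast
    also have "\<dots> = M k" using Pexp[of k "ys k" "vs k"] unfolding M_def by simp
    finally show ?thesis .
  qed
  have tele: "M (K + n) + \<theta>l * (\<Sum>i<n. Dl (K + i)) \<le> M K" for n
  proof (induction n)
    case 0 then show ?case by simp
  next
    case (Suc n)
    have "M (Suc (K + n)) + \<theta>l * Dl (K + n) \<le> M (K + n)" by (rule Mdesc) simp
    then show ?case using Suc by (simp add: distrib_left)
  qed
  define e where "e = min \<epsilon>1 \<epsilon>2"
  have epos: "e > 0" unfolding e_def using params(1,2) by simp
  have Dlarge: "Dl k > e\<^sup>2" if "k \<ge> K" for k
  proof -
    have "norm (ys (Suc k) - ys k) > \<epsilon>1 \<or> norm (vs (Suc k) - vs k) > \<epsilon>2"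
      using NS[of k] K[OF that] by auto
    then have "norm (ys (Suc k) - ys k) > e \<or> norm (vs (Suc k) - vs k) > e"
      unfolding e_def by auto
    then have "(norm (ys (Suc k) - ys k))\<^sup>2 > e\<^sup>2 \<or> (norm (vs (Suc k) - vs k))\<^sup>2 > e\<^sup>2"
    proof -
      have sq: "\<And>x::real. e < x \<Longrightarrow> e\<^sup>2 < x\<^sup>2" using epos by (simp add: power_strict_mono)
      show ?thesis using sq \<open>norm (ys (Suc k) - ys k) > e \<or> norm (vs (Suc k) - vs k) > e\<close> by blast
    qed
    then show ?thesis unfolding Dl_def by (smt (verit) zero_le_power2)
  qed
  obtain n :: nat where n: "(M K + Bf) / (\<theta>l * e\<^sup>2) < real n"
    using reals_Archimedean2 by blast
  have "real n * e\<^sup>2 \<le> (\<Sum>i<n. Dl (K + i))"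
  proof -
    have "(\<Sum>i<n. e\<^sup>2) \<le> (\<Sum>i<n. Dl (K + i))"
      by (rule sum_mono) (use Dlarge in \<open>auto intro: less_imp_le\<close>)
    then show ?thesis by simp
  qed
  then have "\<theta>l * (real n * e\<^sup>2) \<le> \<theta>l * (\<Sum>i<n. Dl (K + i))"
    using params(4) by simp
  then have "- Bf + \<theta>l * (real n * e\<^sup>2) \<le> M K"
    using tele[of n] Mlow[of "K + n"] by linarith
  moreover have "M K + Bf < \<theta>l * e\<^sup>2 * real n"
    using n params(4) epos by (simp add: pos_divide_less_eq mult.commute)
  ultimately show False by (simp add: algebra_simps)
qed

end
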